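(* For every $n\ge1$ and $x\in(0,1/2]$, the function $G_n$ satisfies $$\frac{n}{x^{1/n}}\ \ge\ G_n(1/x)\ \ge\ \frac12\cdot\frac{n}{x^{1/n}}\quad\text{when } x\le 2^{-n},$$ $$2\log_2(1/x)\ \ge\ G_n(1/x)\ \ge\ 2+\log\frac{1}{2x}\quad\text{when } x>2^{-n},$$ and $\displaystyle\lim_{x\to0^+}\frac{G_n(1/x)}{n/x^{1/n}}=1$.
   Context: $\log$ is the natural logarithm. The function $G_n$ on $[2,\infty)$: for $n=1$, $G_1(1/x)=1/x$. For $n>1$, $G_n(2)=2$, and for every $\gamma>0$, $$x\,G_n(1/x)=\frac{\gamma n}{(1+\gamma)^n-1}\left[\frac{(1+\gamma)^{n-1}\gamma(n-1)}{(1+\gamma)^{n-1}-1}\right]^{1-1/n}\quad\text{where}\quad x=\frac{(1+\gamma)^{n-1}[\gamma(n-1)-1]+1}{[(1+\gamma)^{n-1}-1][(1+\gamma)^n-1]}\in(0,1/2).$$ *)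

theory Defs
  imports "HOL-Analysis.Analysis"
begin

text \<open>Parametrisation of G_n for n > 1: the point x(gamma) in (0,1/2) and the value
  x * G_n(1/x) as functions of the parameter gamma > 0.\<close>

definition xpar :: "nat \<Rightarrow> real \<Rightarrow> real" where
  "xpar n \<gamma> =
     ((1 + \<gamma>) ^ (n - 1) * (\<gamma> * real (n - 1) - 1) + 1) /
     (((1 + \<gamma>) ^ (n - 1) - 1) * ((1 + \<gamma>) ^ n - 1))"

definition Fpar :: "nat \<Rightarrow> real \<Rightarrow> real" where
  "Fpar n \<gamma> =
     (\<gamma> * real n / ((1 + \<gamma>) ^ n - 1)) *
     ((1 + \<gamma>) ^ (n - 1) * \<gamma> * real (n - 1) / ((1 + \<gamma>) ^ (n - 1) - 1))
       powr (1 - 1 / real n)"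

definition G :: "nat \<Rightarrow> real \<Rightarrow> real" where
  "G n y =
     (if n = 1 then y
      else if y = 2 then 2
      else (THE v. \<exists>\<gamma>>0. xpar n \<gamma> = 1 / y \<and> v = Fpar n \<gamma> / xpar n \<gamma>))"

end

theory Submission
  imports Defs
begin


definition S :: "nat \<Rightarrow> real \<Rightarrow> real" where "S m t = (\<Sum>j<m. t^j)"
definition P :: "nat \<Rightarrow> real \<Rightarrow> real" where "P m t = (\<Sum>j<m. real (j+1) * t^j)"
definition Sd :: "nat \<Rightarrow> real \<Rightarrow> real" where "Sd m t = (\<Sum>j<m. real j * t^(j-1))"
definition Pd :: "nat \<Rightarrow> real \<Rightarrow> real" where "Pd m t = (\<Sum>j<m. real (j+1) * (real j * t^(j-1)))"

lemma S_0[simp]: "S 0 t = 0" by (simp add: S_def)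
lemma S_Suc[simp]: "S (Suc m) t = S m t + t^m" by (simp add: S_def)
lemma P_0[simp]: "P 0 t = 0" by (simp add: P_def)
lemma P_Suc[simp]: "P (Suc m) t = P m t + real (m+1) * t^m" by (simp add: P_def)
lemma Sd_0[simp]: "Sd 0 t = 0" by (simp add: Sd_def)
lemma Sd_Suc[simp]: "Sd (Suc m) t = Sd m t + real m * t^(m-1)" by (simp add: Sd_def)
lemma Pd_0[simp]: "Pd 0 t = 0" by (simp add: Pd_def)
lemma Pd_Suc[simp]: "Pd (Suc m) t = Pd m t + real (m+1) * (real m * t^(m-1))" by (simp add: Pd_def)

lemma S_mul: "(t - 1) * S m t = t^m - 1"
  by (induction m) (auto simp: algebra_simps)

lemma P_mul: "(t - 1) * P m t = real m * t^m - S m t"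
  by (induction m) (auto simp: algebra_simps)

lemma tSd: "t * Sd m t = P m t - S m t"
proof (induction m)
  case (Suc m)
  have e: "t * (real m * t^(m-1)) = real m * t^m"
    by (cases m) auto
  have "t * Sd (Suc m) t = t * Sd m t + t * (real m * t^(m-1))" by (simp add: algebra_simps)
  also have "\<dots> = P m t - S m t + real m * t^m" using Suc e by simp
  finally show ?case by (simp add: algebra_simps)
qed simp

lemma tPd: "t \<ge> 0 \<Longrightarrow> t * Pd m t + P m t \<le> real m * P m t"
proof (induction m)
  case (Suc m)
  have e: "t * (real (m+1) * (real m * t^(m-1))) = real (m+1) * real m * t^m"
    by (cases m) auto
  have "P m t \<ge> 0" unfolding P_def using Suc.prems by (intro sum_nonneg) auto
  then show ?case using Suc e by (simp add: algebra_simps)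
qed simp

lemma S_nonneg: "t \<ge> 0 \<Longrightarrow> S m t \<ge> 0" unfolding S_def by (intro sum_nonneg) auto
lemma P_nonneg: "t \<ge> 0 \<Longrightarrow> P m t \<ge> 0" unfolding P_def by (intro sum_nonneg) auto

lemma S_ge: "t \<ge> 1 \<Longrightarrow> S m t \<ge> real m"
proof (induction m)
  case (Suc m)
  have a: "1 \<le> t^m" using Suc.prems by (rule one_le_power)
  have b: "S (Suc m) t = S m t + t^m" by simp
  show ?case using Suc.IH[OF Suc.prems] a b by simp
qed simp

lemma tS_le: "t \<ge> 1 \<Longrightarrow> t * S m t \<le> real m * t^m"
proof (induction m)
  case (Suc m)
  have a: "t^m \<le> t^Suc m" using Suc.prems by (simp add: power_increasing)
  have b: "real m * t^m \<le> real m * t^Suc m" using a by (simp add: mult_left_mono)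
  have c: "t * S (Suc m) t = t * S m t + t^(Suc m)" by (simp add: algebra_simps)
  have d: "real (Suc m) * t^(Suc m) = real m * t^Suc m + t^Suc m" by (simp add: algebra_simps)
  show ?case using Suc b c d by linarith
qed simp

lemma S_le: "t \<ge> 1 \<Longrightarrow> S m t \<le> real m * t^m"
proof (induction m)
  case (Suc m)
  have a: "t^m \<le> t^Suc m" using Suc.prems by (simp add: power_increasing)
  have b: "real m * t^m \<le> real m * t^Suc m" using a by (simp add: mult_left_mono)
  have d: "real (Suc m) * t^(Suc m) = real m * t^Suc m + t^Suc m" by (simp add: algebra_simps)
  have c: "S (Suc m) t = S m t + t^m" by simp
  show ?case using Suc.IH[OF Suc.prems] a b c d by linarith
qed simp

lemma tP_ge: "t \<ge> 0 \<Longrightarrow> t * P m t \<ge> real m * t^m"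
proof (induction m)
  case (Suc m)
  have "P m t \<ge> 0" using P_nonneg Suc.prems by auto
  then show ?case using Suc.prems by (simp add: algebra_simps)
qed simp

lemma tP_le: "t \<ge> 0 \<Longrightarrow> t * P m t \<le> real m * S (Suc m) t"
proof (induction m)
  case (Suc m)
  have "S (Suc m) t \<ge> 0" using S_nonneg Suc.prems by blast
  then show ?case using Suc by (simp add: algebra_simps)
qed simp

lemma pairing: "t \<ge> 1 \<Longrightarrow> (real N - 1) * S N t \<le> 2 * (P N t - S N t)"
proof (induction N)
  case (Suc N)
  have "S N t \<le> real N * t^N" using S_le Suc.prems by blast
  then show ?case using Suc by (simp add: algebra_simps)
qed simp

lemma P_one: "P m 1 = real m * (real m + 1) / 2"
  by (induction m) (auto simp: field_simps)
lemma S_one: "S m 1 = real m"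
  by (induction m) auto

lemma DERIV_S: "DERIV (S m) t :> Sd m t"
proof (induction m)
  case 0 then show ?case by simp
next
  case (Suc m)
  have "DERIV (\<lambda>t. S m t + t^m) t :> Sd m t + real m * t^(m-1)"
    by (intro DERIV_add Suc DERIV_pow[THEN DERIV_cong]) simp
  then show ?case by simp
qed

lemma DERIV_P: "DERIV (P m) t :> Pd m t"
proof (induction m)
  case 0 then show ?case by simp
next
  case (Suc m)
  have "DERIV (\<lambda>t. P m t + real (m+1) * t^m) t :> Pd m t + real (m+1) * (real m * t^(m-1))"
    by (intro DERIV_add Suc DERIV_cmult DERIV_pow[THEN DERIV_cong]) simp
  then show ?case by simp
qed



definition yy :: "nat \<Rightarrow> real \<Rightarrow> real" where
  "yy m t = S m t * S (Suc m) t / P m t"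
definition DD :: "nat \<Rightarrow> real \<Rightarrow> real" where
  "DD m t = (real m / (t * S m t)) powr (real m / real (Suc m))"
definition GG :: "nat \<Rightarrow> real \<Rightarrow> real" where
  "GG m t = (t^m - 1 + yy m t) * DD m t"

lemma S_pos: "m \<ge> 1 \<Longrightarrow> t \<ge> 1 \<Longrightarrow> S m t > 0"
  using S_ge[of t m] by auto
lemma P_pos: "m \<ge> 1 \<Longrightarrow> t > 0 \<Longrightarrow> P m t > 0"
proof -
  assume "m \<ge> 1" "t > 0"
  then have "t * P m t \<ge> real m * t^m" using tP_ge by auto
  moreover have "real m * t^m > 0" using \<open>m \<ge> 1\<close> \<open>t > 0\<close> by auto
  ultimately have "t * P m t > 0" by linarith
  then show ?thesis using \<open>t > 0\<close> by (simp add: zero_less_mult_iff)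
qed

lemma key_id: "(t^m - 1) * P m t + S m t * S (Suc m) t = real (Suc m) * t^m * S m t"
proof -
  have "(t^m - 1) * P m t = S m t * ((t - 1) * P m t)"
    using S_mul[of t m] by (metis mult.assoc mult.commute)
  also have "\<dots> = S m t * (real m * t^m - S m t)" by (simp add: P_mul)
  finally show ?thesis by (simp add: algebra_simps)
qed

lemma xpar_eq:
  assumes "m \<ge> 1" "t > 1"
  shows "xpar (Suc m) (t - 1) = P m t / (S m t * S (Suc m) t)"
proof -
  have e1: "t^m - 1 = (t-1) * S m t" using S_mul[of t m] by simp
  have e2: "t^Suc m - 1 = (t-1) * S (Suc m) t" using S_mul[of t "Suc m"] by simp
  have e3: "t^m * ((t-1) * real m - 1) + 1 = (t-1) * ((t-1) * P m t)"
  proof -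
    have "(t-1) * ((t-1) * P m t) = (t-1) * (real m * t^m - S m t)" by (simp add: P_mul)
    also have "\<dots> = real m * t^m * (t-1) - (t-1) * S m t" by (simp add: algebra_simps)
    also have "\<dots> = real m * t^m * (t-1) - (t^m - 1)" by (simp add: S_mul)
    finally show ?thesis by (simp add: algebra_simps)
  qed
  have "xpar (Suc m) (t - 1) = (t^m * ((t-1) * real m - 1) + 1) / ((t^m - 1) * (t^Suc m - 1))"
    unfolding xpar_def by simp
  also have "\<dots> = ((t-1) * (t-1)) * P m t / (((t-1) * (t-1)) * (S m t * S (Suc m) t))"
    by (simp only: e1 e2 e3) (simp add: algebra_simps)
  also have "\<dots> = P m t / (S m t * S (Suc m) t)"
    using assms by simp
  finally show ?thesis .
qed

lemma Fpar_eq: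
  assumes "m \<ge> 1" "t > 1"
  shows "Fpar (Suc m) (t - 1) = (real (Suc m) / S (Suc m) t) * (real m * t^m / S m t) powr (real m / real (Suc m))"
proof -
  have e1: "t^m - 1 = (t-1) * S m t" using S_mul[of t m] by simp
  have e2: "t^Suc m - 1 = (t-1) * S (Suc m) t" using S_mul[of t "Suc m"] by simp
  have ex: "1 - 1 / real (Suc m) = real m / real (Suc m)" by (simp add: field_simps)
  have h1: "1 + (t - 1) = t" by simp
  have h2: "Suc m - 1 = m" by simp
  have "Fpar (Suc m) (t - 1) = ((t - 1) * real (Suc m) / ((t-1) * S (Suc m) t)) *
      (t^m * (t - 1) * real m / ((t-1) * S m t)) powr (1 - 1 / real (Suc m))"
    unfolding Fpar_def by (simp only: h1 h2 e1 e2)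
  also have "(t - 1) * real (Suc m) / ((t-1) * S (Suc m) t) = real (Suc m) / S (Suc m) t"
    using assms by simp
  also have "t^m * (t - 1) * real m / ((t-1) * S m t) = real m * t^m / S m t"
    using assms by simp
  finally show ?thesis by (simp only: ex)
qed

lemma DD_tm:
  assumes "m \<ge> 1" "t \<ge> 1"
  shows "t^m * DD m t = (real m * t^m / S m t) powr (real m / real (Suc m))"
proof -
  have Sp: "S m t > 0" using S_pos assms by auto
  have "real m * t^m / S m t = (real m / (t * S m t)) * t^Suc m"
    using assms Sp by (simp add: field_simps)
  then have "(real m * t^m / S m t) powr (real m / real (Suc m))
      = (real m / (t * S m t) * t^Suc m) powr (real m / real (Suc m))"
    by (simp only:)
  also have "\<dots> = DD m t * (t^Suc m) powr (real m / real (Suc m))"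
    unfolding DD_def by (rule powr_mult)
  also have "(t^Suc m) powr (real m / real (Suc m)) = t^m"
  proof -
    have tt: "t^Suc m = t powr real (Suc m)" by (rule powr_realpow[symmetric]) (use assms in simp)
    have "(t^Suc m) powr (real m / real (Suc m)) = (t powr real (Suc m)) powr (real m / real (Suc m))"
      by (simp only: tt)
    also have "\<dots> = t powr real m" by (simp add: powr_powr)
    also have "\<dots> = t^m" using assms by (simp add: powr_realpow)
    finally show ?thesis .
  qed
  finally show ?thesis by simp
qed

lemma GG_alt:
  assumes "m \<ge> 1" "t \<ge> 1"
  shows "GG m t = real (Suc m) * S m t / P m t * (real m * t^m / S m t) powr (real m / real (Suc m))"
proof -
  have Pp: "P m t > 0" using P_pos assms by auto
  have "t^m - 1 + yy m t = real (Suc m) * t^m * S m t / P m t"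
    using key_id[of t m] Pp unfolding yy_def by (simp add: field_simps)
  then have "GG m t = real (Suc m) * S m t / P m t * (t^m * DD m t)"
    unfolding GG_def by (simp add: algebra_simps)
  then show ?thesis using DD_tm assms by simp
qed

lemma FG_eq:
  assumes "m \<ge> 1" "t > 1"
  shows "Fpar (Suc m) (t - 1) / xpar (Suc m) (t - 1) = GG m t"
proof -
  have Sp: "S m t > 0" "S (Suc m) t > 0" using S_pos[of m t] S_pos[of "Suc m" t] assms by (auto simp del: S_Suc)
  have Pp: "P m t > 0" using P_pos assms by auto
  define A where "A = (real m * t^m / S m t) powr (real m / real (Suc m))"
  have "(real (Suc m) / S (Suc m) t) * A / (P m t / (S m t * S (Suc m) t)) = real (Suc m) * S m t / P m t * A"
    using Sp Pp by (simp add: field_simps del: S_Suc)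
  then show ?thesis
    unfolding Fpar_eq[OF assms] xpar_eq[OF assms] GG_alt[OF assms(1) less_imp_le[OF assms(2)]] A_def .
qed

lemma yy_one: "m \<ge> 1 \<Longrightarrow> yy m 1 = 2"
proof -
  assume "m \<ge> 1"
  then have "real m > 0" by simp
  then have d: "real m + real m * real m \<noteq> 0" by (smt (verit) mult_pos_pos)
  from \<open>real m > 0\<close> show ?thesis unfolding yy_def S_one P_one by (simp add: field_simps d)
qed

lemma DD_one: "m \<ge> 1 \<Longrightarrow> DD m 1 = 1"
  unfolding DD_def by (simp add: S_one)

lemma GG_one: "m \<ge> 1 \<Longrightarrow> GG m 1 = 2"
  unfolding GG_def by (simp add: yy_one DD_one)



definition yd :: "nat \<Rightarrow> real \<Rightarrow> real" where
  "yd m t = ((Sd m t * S (Suc m) t + S m t * Sd (Suc m) t) * P m t - S m t * S (Suc m) t * Pd m t)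
            / (P m t * P m t)"

lemma DERIV_yy:
  assumes "m \<ge> 1" "t > 0"
  shows "DERIV (yy m) t :> yd m t"
proof -
  have Pp: "P m t \<noteq> 0" using P_pos assms by (metis less_irrefl)
  have e: "yy m = (\<lambda>t. S m t * S (Suc m) t / P m t)" by (rule ext) (simp only: yy_def)
  have d1: "DERIV (\<lambda>t. S m t * S (Suc m) t) t :> S m t * Sd (Suc m) t + Sd m t * S (Suc m) t"
    by (rule DERIV_mult'[OF DERIV_S DERIV_S])
  have "DERIV (\<lambda>t. S m t * S (Suc m) t / P m t) t :>
     ((S m t * Sd (Suc m) t + Sd m t * S (Suc m) t) * P m t - S m t * S (Suc m) t * Pd m t) / (P m t * P m t)"
    by (rule DERIV_divide[OF d1 DERIV_P Pp])
  then show ?thesis unfolding e yd_def by (simp only: add.commute)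
qed

lemma num_pos_aux:
  fixes a b c S S1 P :: real
  assumes "S > 0" "S1 > 0" "P > 0"
    and ha: "(real m - 1) * S \<le> 2 * a" and hb: "real m * S1 \<le> 2 * b" and hc: "c + P \<le> real m * P"
  shows "(a * S1 + S * b) * P - S * S1 * c > 0"
proof -
  have sp: "S1 * P > 0" "S * P > 0" "S * S1 > 0" using assms by auto
  have 1: "(real m - 1) * S * (S1 * P) \<le> 2 * a * (S1 * P)"
    using mult_right_mono[OF ha, of "S1 * P"] sp by simp
  have 2: "real m * S1 * (S * P) \<le> 2 * b * (S * P)"
    using mult_right_mono[OF hb, of "S * P"] sp by simp
  have 3: "(S * S1) * c \<le> (S * S1) * (real m * P - P)"
    using mult_left_mono[of c "real m * P - P" "S * S1"] hc sp by simp
  have "2 * ((a * S1 + S * b) * P - S * S1 * c) \<ge> S * S1 * P"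
  proof -
    have "2 * ((a * S1 + S * b) * P - S * S1 * c) = 2 * a * (S1 * P) + 2 * b * (S * P) - 2 * ((S * S1) * c)"
      by (simp add: algebra_simps)
    also have "\<dots> \<ge> (real m - 1) * S * (S1 * P) + real m * S1 * (S * P) - 2 * ((S * S1) * (real m * P - P))"
      using 1 2 3 by linarith
    also have "(real m - 1) * S * (S1 * P) + real m * S1 * (S * P) - 2 * ((S * S1) * (real m * P - P)) = S * S1 * P"
      by (simp add: algebra_simps)
    finally show ?thesis .
  qed
  moreover have "S * S1 * P > 0" using assms by auto
  ultimately have "2 * ((a * S1 + S * b) * P - S * S1 * c) > 0" by (metis less_le_trans)
  then show ?thesis by simp
qed

lemma yd_pos:
  assumes "m \<ge> 1" "t \<ge> 1"
  shows "yd m t > 0"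
proof -
  have Sp: "S m t > 0" "S (Suc m) t > 0" using S_pos[of m t] S_pos[of "Suc m" t] assms by (auto simp del: S_Suc)
  have Pp: "P m t > 0" using P_pos assms by auto
  have ha: "(real m - 1) * S m t \<le> 2 * (t * Sd m t)"
    using pairing[of t m] assms by (simp add: tSd)
  have hb: "real m * S (Suc m) t \<le> 2 * (t * Sd (Suc m) t)"
    using pairing[of t "Suc m"] assms tSd[of t "Suc m"] by (simp del: S_Suc P_Suc Sd_Suc)
  have hc: "t * Pd m t + P m t \<le> real m * P m t" using tPd assms by auto
  have "((t * Sd m t) * S (Suc m) t + S m t * (t * Sd (Suc m) t)) * P m t - S m t * S (Suc m) t * (t * Pd m t) > 0"
    by (rule num_pos_aux[OF Sp Pp ha hb hc])
  then have "t * (((Sd m t * S (Suc m) t + S m t * Sd (Suc m) t) * P m t - S m t * S (Suc m) t * Pd m t)) > 0"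
    by (simp add: algebra_simps)
  then have "((Sd m t * S (Suc m) t + S m t * Sd (Suc m) t) * P m t - S m t * S (Suc m) t * Pd m t) > 0"
    using assms by (simp add: zero_less_mult_iff)
  then show ?thesis unfolding yd_def using Pp by simp
qed

lemma yy_strict_mono:
  assumes "m \<ge> 1" "1 \<le> a" "a < b"
  shows "yy m a < yy m b"
  using assms(3)
proof (rule DERIV_pos_imp_increasing)
  fix x assume "a \<le> x" "x \<le> b"
  then show "\<exists>y. DERIV (yy m) x :> y \<and> y > 0"
    using DERIV_yy[of m x] yd_pos[of m x] assms by auto
qed

lemma yy_mono:
  assumes "m \<ge> 1" "1 \<le> a" "a \<le> b"
  shows "yy m a \<le> yy m b"
  using yy_strict_mono[of m a b] assms by (cases "a = b") auto

lemma yy_inj: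
  assumes "m \<ge> 1" "1 \<le> a" "1 \<le> b" "yy m a = yy m b"
  shows "a = b"
  using yy_strict_mono[of m a b] yy_strict_mono[of m b a] assms by (cases a b rule: linorder_cases) auto

lemma yy_cont: "m \<ge> 1 \<Longrightarrow> 0 < a \<Longrightarrow> continuous_on {a..b} (yy m)"
  by (intro continuous_at_imp_continuous_on ballI DERIV_isCont[OF DERIV_yy]) auto

definition DDd :: "nat \<Rightarrow> real \<Rightarrow> real" where
  "DDd m t = - (real m / real (Suc m)) * DD m t * P m t / (t * S m t)"

lemma DERIV_DD:
  assumes "m \<ge> 1" "t \<ge> 1"
  shows "DERIV (DD m) t :> DDd m t"
proof -
  have Sp: "S m t > 0" using S_pos assms by auto
  have tS: "t * S m t > 0" using Sp assms by simp
  have dT0: "DERIV (\<lambda>t. t * S m t) t :> 1 * S m t + Sd m t * t"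
    by (rule DERIV_mult[OF DERIV_ident DERIV_S])
  have "1 * S m t + Sd m t * t = P m t" using tSd[of t m] by (simp add: algebra_simps)
  with dT0 have dT: "DERIV (\<lambda>t. t * S m t) t :> P m t" by simp
  have dg: "DERIV (\<lambda>t. real m / (t * S m t)) t :> (0 * (t * S m t) - real m * P m t) / ((t * S m t) * (t * S m t))"
    by (rule DERIV_divide[OF DERIV_const dT]) (use tS Sp assms in simp)
  have gp: "real m / (t * S m t) > 0" using tS assms by simp
  have d: "DERIV (\<lambda>t. (real m / (t * S m t)) powr (real m / real (Suc m))) t :>
     (real m / real (Suc m)) * (real m / (t * S m t)) powr (real m / real (Suc m) - of_nat 1) *
      ((0 * (t * S m t) - real m * P m t) / ((t * S m t) * (t * S m t)))"
    by (rule DERIV_fun_powr[OF dg gp])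
  have e: "(real m / (t * S m t)) powr (real m / real (Suc m) - of_nat 1)
      = DD m t / (real m / (t * S m t))"
    unfolding DD_def using gp tS by (simp add: powr_diff)
  have e2: "(real m / real (Suc m)) * (DD m t / (real m / (t * S m t))) *
      ((0 * (t * S m t) - real m * P m t) / ((t * S m t) * (t * S m t))) = DDd m t"
  proof -
    have gen: "(mm / k) * (D / (mm / X)) * ((0 * X - mm * PP) / (X * X)) = - (mm / k) * D * PP / X"
      if "mm \<noteq> 0" "X \<noteq> 0" "k \<noteq> 0" for mm k D PP X :: real
      using that by (simp add: field_simps)
    show ?thesis unfolding DDd_def using tS assms by (intro gen) auto
  qed
  have ee: "DD m = (\<lambda>t. (real m / (t * S m t)) powr (real m / real (Suc m)))"
    by (rule ext) (simp only: DD_def)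
  show ?thesis unfolding ee using d unfolding e e2 .
qed

lemma DERIV_GG:
  assumes "m \<ge> 1" "t \<ge> 1"
  shows "DERIV (GG m) t :> yd m t * DD m t"
proof -
  have Sp: "S m t > 0" using S_pos assms by auto
  have Pp: "P m t > 0" using P_pos assms by auto
  have ee: "GG m = (\<lambda>t. (t^m - 1 + yy m t) * DD m t)"
    by (rule ext) (simp only: GG_def)
  have d1: "DERIV (\<lambda>t. t^m - 1 + yy m t) t :> real m * t^(m-1) + yd m t"
    using DERIV_add[OF DERIV_diff[OF DERIV_pow DERIV_const] DERIV_yy[of m t]] assms by simp
  have d: "DERIV (GG m) t :> (real m * t^(m-1) + yd m t) * DD m t + DDd m t * (t^m - 1 + yy m t)"
    unfolding ee by (rule DERIV_mult[OF d1 DERIV_DD[OF assms]])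
  have h: "t^m - 1 + yy m t = real (Suc m) * t^m * S m t / P m t"
    using key_id[of t m] Pp unfolding yy_def by (simp add: field_simps)
  have tt: "t * t^(m-1) = t^m" using assms by (cases m) auto
  have gen: "- (mm / k) * D * PP / (tt * SS) * (k * T * SS / PP) = - mm * D * (T / tt)"
    if "k \<noteq> 0" "PP \<noteq> 0" "SS \<noteq> 0" "tt \<noteq> 0" for mm k D PP tt SS T :: real
    using that by (simp add: field_simps)
  have "DDd m t * (t^m - 1 + yy m t) = - real m * DD m t * (t^m / t)"
    unfolding h DDd_def using Sp Pp assms by (intro gen) auto
  also have "t^m / t = t^(m-1)" using tt assms by (simp add: field_simps)
  finally have "DDd m t * (t^m - 1 + yy m t) = - real m * DD m t * t^(m-1)" .
  then show ?thesis using d by (simp add: algebra_simps)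
qed



lemma ln2_le: "ln (2::real) \<le> 6932/10000"
proof -
  obtain c where "exp (6932/10000::real) = (\<Sum>k<8. (6932/10000) ^ k / fact k) + exp c / fact 8 * (6932/10000) ^ 8"
    using Maclaurin_exp_le[of "6932/10000::real" 8] by blast
  moreover have "exp c / fact 8 * (6932/10000::real) ^ 8 \<ge> 0" by simp
  moreover have "(\<Sum>k<8. (6932/10000::real) ^ k / fact k) \<ge> 2"
    by (simp add: eval_nat_numeral fact_numeral)
  ultimately have "exp (6932/10000::real) \<ge> 2" by linarith
  then show ?thesis by (metis exp_le_cancel_iff exp_ln zero_less_numeral)
qed

lemma ln2_exp: "ln (2::real) * exp (68/225) \<le> 1"
proof -
  obtain c where "exp (-68/225::real) = (\<Sum>k<4. (-68/225) ^ k / fact k) + exp c / fact 4 * (-68/225) ^ 4"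
    using Maclaurin_exp_le[of "-68/225::real" 4] by blast
  moreover have "exp c / fact 4 * (-68/225::real) ^ 4 \<ge> 0" by simp
  moreover have "(\<Sum>k<4. (-68/225::real) ^ k / fact k) \<ge> 6932/10000"
    by (simp add: eval_nat_numeral fact_numeral)
  ultimately have "exp (-68/225::real) \<ge> 6932/10000" by linarith
  then have "ln 2 \<le> exp (-68/225::real)" using ln2_le by linarith
  then have "ln 2 * exp (68/225) \<le> exp (-68/225::real) * exp (68/225)"
    by (simp add: mult_right_mono)
  also have "\<dots> = 1" by (simp add: exp_add[symmetric])
  finally show ?thesis .
qed



lemma DD_pow:
  assumes "m \<ge> 1" "t \<ge> 1"
  shows "DD m t ^ Suc m = (real m / (t * S m t)) ^ m"
proof -
  have Sp: "S m t > 0" using S_pos assms by auto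
  have gp: "real m / (t * S m t) > 0" using Sp assms by simp
  have Dp: "DD m t > 0" unfolding DD_def using gp Sp assms by simp
  have "DD m t ^ Suc m = DD m t powr real (Suc m)"
    by (rule powr_realpow[symmetric]) (rule Dp)
  also have "\<dots> = (real m / (t * S m t)) powr real m"
    unfolding DD_def powr_powr by simp
  also have "\<dots> = (real m / (t * S m t)) ^ m" using gp by (simp add: powr_realpow)
  finally show ?thesis .
qed

lemma DD_pos: "m \<ge> 1 \<Longrightarrow> t \<ge> 1 \<Longrightarrow> DD m t > 0"
  unfolding DD_def using S_pos[of m t] by simp

lemma yy_pos: "m \<ge> 1 \<Longrightarrow> t \<ge> 1 \<Longrightarrow> yy m t > 0"
  unfolding yy_def using S_pos[of m t] S_pos[of "Suc m" t] P_pos[of m t]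
  by (simp del: S_Suc)

lemma DD_ge:
  assumes "m \<ge> 1" "t \<ge> 1"
  shows "1 / yy m t \<le> DD m t"
proof -
  have Sp: "S m t > 0" "S (Suc m) t > 0" using S_pos[of m t] S_pos[of "Suc m" t] assms by (auto simp del: S_Suc)
  have Pp: "P m t > 0" using P_pos assms by auto
  define g where "g = real m / (t * S m t)"
  have gp: "g > 0" unfolding g_def using Sp assms by simp
  have tSp: "t * S m t > 0" using Sp assms by simp
  have "t * S m t \<ge> 1 * S m t" by (rule mult_right_mono) (use assms Sp in auto)
  then have tSm: "t * S m t \<ge> real m" using S_ge[of t m] assms by linarith
  have "g \<le> (t * S m t) / (t * S m t)" unfolding g_def
    by (rule divide_right_mono[OF tSm]) (use tSp in simp)
  moreover have "(t * S m t) / (t * S m t) = 1" using tSp by (metis divide_self less_irrefl)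
  ultimately have g1: "g \<le> 1" by simp
  have "g powr 1 \<le> g powr (real m / real (Suc m))"
    by (rule powr_mono') (use gp g1 in auto)
  then have "g \<le> DD m t" unfolding DD_def g_def[symmetric] using gp by simp
  moreover have "1 / yy m t \<le> g"
  proof -
    have "t * P m t \<le> real m * S (Suc m) t" using tP_le assms by auto
    then have "(t * P m t) / (t * S m t * S (Suc m) t) \<le> (real m * S (Suc m) t) / (t * S m t * S (Suc m) t)"
      by (rule divide_right_mono) (use Sp assms in simp)
    moreover have "(t * P m t) / (t * S m t * S (Suc m) t) = 1 / yy m t"
      unfolding yy_def using Sp assms by (simp del: S_Suc)
    moreover have "(real m * S (Suc m) t) / (t * S m t * S (Suc m) t) = g"
      unfolding g_def using Sp assms by (simp del: S_Suc)
    ultimately show ?thesis by simp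
  qed
  ultimately show ?thesis by linarith
qed

lemma r_le1:
  assumes "m \<ge> 1" "t \<ge> 1"
  shows "real m * S (Suc m) t \<le> (t + 1) * P m t"
proof -
  have "(t + 1) * P m t - real m * S (Suc m) t = 2 * (P m t - S m t) - (real m - 1) * S m t"
    using P_mul[of t m] by (simp add: algebra_simps)
  then show ?thesis using pairing[of t m] assms by linarith
qed

lemma V_id: "(t - 1)^2 * ((real m + 1) * S m t - P m t) = t^(Suc m) - (real m + 1) * t + real m"
proof -
  have "(t - 1)^2 * ((real m + 1) * S m t - P m t) = (t-1) * ((real m + 1) * ((t-1) * S m t) - (t-1) * P m t)"
    by (simp add: power2_eq_square algebra_simps)
  also have "\<dots> = (t-1) * ((real m + 1) * (t^m - 1) - (real m * t^m - S m t))"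
    by (simp add: S_mul P_mul)
  also have "\<dots> = (t-1) * t^m - (real m + 1) * (t - 1) + (t-1) * S m t"
    by (simp add: algebra_simps)
  also have "\<dots> = (t-1) * t^m - (real m + 1) * (t - 1) + (t^m - 1)"
    by (simp only: S_mul)
  also have "\<dots> = t^(Suc m) - (real m + 1) * t + real m"
    by (simp add: algebra_simps)
  finally show ?thesis .
qed

lemma r_le2:
  assumes "m \<ge> 1" "t > 1"
  shows "real m * S (Suc m) t \<le> t * P m t * (1 + t / (real m * (t - 1)^2))"
proof -
  have Pp: "P m t > 0" using P_pos assms by auto
  have e: "real m * S (Suc m) t - t * P m t = (real m + 1) * S m t - P m t"
    using P_mul[of t m] by (simp add: algebra_simps)
  have mt: "(real m + 1) * t \<ge> real m + 1" using assms by simp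
  have "(t - 1)^2 * ((real m + 1) * S m t - P m t) \<le> t^(Suc m)"
    unfolding V_id using mt by linarith
  then have V: "(real m + 1) * S m t - P m t \<le> t^(Suc m) / (t - 1)^2"
    using assms by (subst pos_le_divide_eq) (simp_all add: mult.commute)
  have tP: "t * P m t \<ge> real m * t^m" using tP_ge assms by auto
  have "t^(Suc m) / (t - 1)^2 = (real m * t^m) * (t / (real m * (t - 1)^2))"
    using assms by simp
  also have "\<dots> \<le> (t * P m t) * (t / (real m * (t - 1)^2))"
    by (rule mult_right_mono[OF tP]) (use assms in simp)
  finally have "real m * S (Suc m) t - t * P m t \<le> (t * P m t) * (t / (real m * (t - 1)^2))"
    using e V by linarith
  then show ?thesis by (simp add: algebra_simps)
qed



lemma K_facts: "ln (2::real) > 0" "1 / ln (2::real) \<ge> 10000/6932" "1 / ln (2::real) \<ge> 1"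
proof -
  show l0: "ln (2::real) > 0" by simp
  show "1 / ln (2::real) \<ge> 10000/6932" using ln2_le l0 by (simp add: field_simps)
  then show "1 / ln (2::real) \<ge> 1" by linarith
qed

lemma small_m_bound:
  assumes "m \<ge> 1" "m \<le> 6"
  shows "(49/32::real)^m \<le> (10000/6932)^(Suc m)"
proof -
  have "m = 1 \<or> m = 2 \<or> m = 3 \<or> m = 4 \<or> m = 5 \<or> m = 6" using assms by arith
  then show ?thesis by (elim disjE) (simp_all add: eval_nat_numeral)
qed

lemma le_by_mult:
  fixes r c a B :: real
  assumes "0 < c" "r * c = a" "a \<le> B * c"
  shows "r \<le> B"
  using assms by (metis mult_le_cancel_right_pos)

lemma rm_bound:
  assumes "m \<ge> 1" "t > 32/17" "0 < r" "r * (t * P m t) = real m * S (Suc m) t"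
  shows "r^m \<le> (1 / ln 2)^(Suc m)"
proof -
  define K :: real where "K = 1 / ln 2"
  have K: "K \<ge> 10000/6932" "K \<ge> 1" using K_facts unfolding K_def by auto
  have t1: "t > 1" using assms by simp
  have Pp: "P m t > 0" using P_pos assms by auto
  have tP: "t * P m t > 0" using Pp t1 by simp
  have r_eq: "r = real m * S (Suc m) t / (t * P m t)" using assms(4) tP t1 Pp by (simp add: eq_divide_eq del: S_Suc)
  show ?thesis
  proof (cases "m \<le> 6")
    case True
    have "r \<le> (t + 1) / t"
    proof (rule le_by_mult[OF tP assms(4)])
      have "(t + 1) / t * (t * P m t) = (t + 1) * P m t" using t1 by simp
      then show "real m * S (Suc m) t \<le> (t + 1) / t * (t * P m t)"
        using r_le1[of m t] assms t1 by (simp del: S_Suc)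
    qed
    also have "(t + 1) / t = 1 + 1 / t" using t1 by (simp add: field_simps)
    also have "\<dots> \<le> 49/32"
    proof -
      have "1 / t \<le> 17/32" using assms(2) t1 by (simp add: divide_simps)
      then show ?thesis by simp
    qed
    finally have "r \<le> 49/32" .
    then have "r^m \<le> (49/32)^m" using assms(3) by (simp add: power_mono)
    also have "\<dots> \<le> (10000/6932)^(Suc m)" using small_m_bound True assms by simp
    also have "\<dots> \<le> K^(Suc m)" by (rule power_mono[OF K(1)]) simp
    finally show ?thesis unfolding K_def .
  next
    case False
    define b where "b = t / (t - 1)^2"
    have "r \<le> 1 + b / real m"
    proof (rule le_by_mult[OF tP assms(4)])
      have "b / real m = t / (real m * (t - 1)^2)" unfolding b_def by simp
      then have eq: "(1 + b / real m) * (t * P m t) = t * P m t * (1 + t / (real m * (t - 1)^2))"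
        by (simp only: mult.commute)
      have "real m * S (Suc m) t \<le> t * P m t * (1 + t / (real m * (t - 1)^2))"
        using r_le2[of m t] assms t1 by blast
      then show "real m * S (Suc m) t \<le> (1 + b / real m) * (t * P m t)"
        unfolding eq .
    qed
    moreover have "r \<ge> 0" using assms by simp
    ultimately have "r^m \<le> (1 + b / real m)^m" by (simp add: power_mono)
    also have "\<dots> \<le> exp b"
    proof (rule exp_ge_one_plus_x_over_n_power_n)
      have "b \<ge> 0" unfolding b_def using t1 by simp
      then show "b \<ge> - real m" by linarith
    qed (use False in auto)
    also have "b \<le> 544/225"
    proof -
      have "(t - 1 - 15/17) * (544 * (t - 1) + 255) \<ge> 0"
        using assms(2) by (intro mult_nonneg_nonneg) auto
      then have "225 * t \<le> 544 * (t - 1)^2" by (simp add: power2_eq_square algebra_simps)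
      then show ?thesis unfolding b_def using t1 by (simp add: divide_simps)
    qed
    then have "exp b \<le> exp (544/225)" by simp
    also have "exp (544/225::real) = exp (68/225) ^ 8"
      by (simp add: exp_of_nat_mult[symmetric])
    also have "\<dots> \<le> K ^ 8"
    proof (rule power_mono)
      show "exp (68/225::real) \<le> K" unfolding K_def using ln2_exp K_facts(1) by (simp add: field_simps)
    qed simp
    also have "\<dots> \<le> K ^ Suc m" using K False by (intro power_increasing) auto
    finally show ?thesis unfolding K_def .
  qed
qed



lemma DDyy_le:
  assumes m: "m \<ge> 1" and t: "t \<ge> 1" and yb: "yy m t \<le> 2^(Suc m)"
  shows "DD m t * yy m t \<le> 2 / ln 2"
proof -
  have Sp: "S m t > 0" "S (Suc m) t > 0" using S_pos[of m t] S_pos[of "Suc m" t] assms by (auto simp del: S_Suc)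
  have Pp: "P m t > 0" using P_pos assms by auto
  have tP: "t * P m t > 0" using Pp t by simp
  have tS: "t * S m t > 0" using Sp t by simp
  define z where "z = real m / (t * S m t)"
  define r where "r = real m * S (Suc m) t / (t * P m t)"
  have zp: "z > 0" unfolding z_def using tS m by simp
  have rp: "r > 0" unfolding r_def using tP Sp m by simp
  have rtP: "r * (t * P m t) = real m * S (Suc m) t" unfolding r_def using tP Pp t by (simp del: S_Suc)
  have yrz: "yy m t = r / z" unfolding yy_def r_def z_def using Sp Pp t m by (simp add: field_simps del: S_Suc)
  have "(DD m t * yy m t) ^ Suc m = z^m * (r / z)^Suc m"
    unfolding power_mult_distrib DD_pow[OF m t] yrz z_def ..
  also have "\<dots> = r^Suc m / z" using zp by (simp add: power_divide field_simps)
  finally have E: "(DD m t * yy m t) ^ Suc m = r^Suc m * (1 / z)" by simp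
  have l0: "ln (2::real) > 0" by simp
  have "r^Suc m * (1 / z) \<le> (2 / ln 2) ^ Suc m"
  proof (cases "t \<le> 32/17")
    case True
    have "r \<le> (t + 1) / t"
    proof (rule le_by_mult[OF tP rtP])
      have "(t + 1) / t * (t * P m t) = (t + 1) * P m t" using t by simp
      then show "real m * S (Suc m) t \<le> (t + 1) / t * (t * P m t)"
        using r_le1[of m t] assms by (simp del: S_Suc)
    qed
    then have a: "r^Suc m \<le> ((t + 1) / t)^Suc m" by (rule power_mono) (use rp in simp)
    have "1 / z = t * S m t / real m" unfolding z_def by simp
    also have "\<dots> \<le> t^m" using tS_le[OF t, of m] m by (simp add: divide_le_eq mult.commute)
    also have "\<dots> \<le> t^Suc m" using t by (simp add: power_increasing)
    finally have b: "1 / z \<le> t^Suc m" .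
    have "r^Suc m * (1 / z) \<le> ((t + 1) / t)^Suc m * t^Suc m"
      by (rule mult_mono[OF a b]) (use zp t in auto)
    also have "\<dots> = (t + 1)^Suc m" using t by (simp add: power_divide)
    also have "\<dots> \<le> (2 / ln 2)^Suc m"
    proof (rule power_mono)
      have "t + 1 \<le> 49/17" using True by simp
      also have "49/17 \<le> 2 / ln (2::real)" using ln2_le l0 by (simp add: field_simps)
      finally show "t + 1 \<le> 2 / ln 2" .
    qed (use t in simp)
    finally show ?thesis .
  next
    case False
    have rm: "r^m \<le> (1 / ln 2)^Suc m" by (rule rm_bound[OF m _ rp rtP]) (use False in simp)
    have "1 / z = yy m t / r" unfolding yrz using zp rp by simp
    also have "\<dots> \<le> 2^Suc m / r" using yb rp by (simp add: divide_right_mono)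
    finally have b: "1 / z \<le> 2^Suc m / r" .
    have "r^Suc m * (1 / z) \<le> r^Suc m * (2^Suc m / r)"
      by (rule mult_left_mono[OF b]) (use rp in simp)
    also have "\<dots> = 2^Suc m * r^m" using rp by (simp add: field_simps)
    also have "\<dots> \<le> 2^Suc m * (1 / ln 2)^Suc m" by (rule mult_left_mono[OF rm]) simp
    also have "\<dots> = (2 / ln 2)^Suc m" by (simp add: power_mult_distrib[symmetric])
    finally show ?thesis .
  qed
  then have "(DD m t * yy m t) ^ Suc m \<le> (2 / ln 2) ^ Suc m" using E by simp
  then show ?thesis by (rule power_le_imp_le_base) (use l0 in simp)
qed



lemma DERIV_lnyy:
  assumes "m \<ge> 1" "t \<ge> 1"
  shows "DERIV (\<lambda>s. ln (yy m s)) t :> yd m t / yy m t"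
proof -
  have yp: "yy m t > 0" using yy_pos assms by auto
  have "DERIV (\<lambda>s. ln (yy m s)) t :> 1 / yy m t * yd m t"
    by (rule DERIV_chain2[OF DERIV_ln_divide[OF yp] DERIV_yy]) (use assms in auto)
  then show ?thesis by simp
qed

lemma log_lower:
  assumes m: "m \<ge> 1" and t: "t \<ge> 1"
  shows "2 + ln (yy m t / 2) \<le> GG m t"
proof -
  define f where "f s = GG m s - ln (yy m s)" for s
  have "f 1 \<le> f t"
  proof (rule DERIV_nonneg_imp_nondecreasing[OF t])
    fix s assume s: "1 \<le> s" "s \<le> t"
    have d: "DERIV f s :> yd m s * DD m s - yd m s / yy m s"
      unfolding f_def[abs_def] using m s by (intro DERIV_diff DERIV_GG DERIV_lnyy) auto
    have "yd m s * DD m s - yd m s / yy m s = yd m s * (DD m s - 1 / yy m s)"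
      by (simp add: algebra_simps)
    also have "\<dots> \<ge> 0" using yd_pos[of m s] DD_ge[of m s] m s by simp
    finally show "\<exists>y. DERIV f s :> y \<and> y \<ge> 0" using d by blast
  qed
  then have "2 - ln 2 \<le> GG m t - ln (yy m t)" unfolding f_def using m by (simp add: GG_one yy_one)
  moreover have "ln (yy m t / 2) = ln (yy m t) - ln 2" using yy_pos[OF m t] by (simp add: ln_div)
  ultimately show ?thesis by linarith
qed

lemma log_upper:
  assumes m: "m \<ge> 1" and t: "t \<ge> 1" and yb: "yy m t \<le> 2^(Suc m)"
  shows "GG m t \<le> 2 / ln 2 * ln (yy m t)"
proof -
  define f where "f s = 2 / ln 2 * ln (yy m s) - GG m s" for s
  have "f 1 \<le> f t"
  proof (rule DERIV_nonneg_imp_nondecreasing[OF t])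
    fix s assume s: "1 \<le> s" "s \<le> t"
    have d: "DERIV f s :> 2 / ln 2 * (yd m s / yy m s) - yd m s * DD m s"
      unfolding f_def[abs_def] using m s by (intro DERIV_diff DERIV_cmult DERIV_GG DERIV_lnyy) auto
    have yp: "yy m s > 0" using yy_pos m s by auto
    have "yy m s \<le> yy m t" using yy_mono m s by auto
    then have "DD m s * yy m s \<le> 2 / ln 2" using DDyy_le[of m s] m s yb by simp
    then have "DD m s \<le> 2 / ln 2 / yy m s" using yp by (simp add: le_divide_eq mult_ac)
    then have "0 \<le> 2 / ln 2 / yy m s - DD m s" by simp
    then have "0 \<le> yd m s * (2 / ln 2 / yy m s - DD m s)" using yd_pos[of m s] m s by simp
    also have "yd m s * (2 / ln 2 / yy m s - DD m s) = 2 / ln 2 * (yd m s / yy m s) - yd m s * DD m s"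
      by (simp add: algebra_simps)
    finally show "\<exists>y. DERIV f s :> y \<and> y \<ge> 0" using d by blast
  qed
  then show ?thesis unfolding f_def using m by (simp add: GG_one yy_one)
qed



lemma yy_ge_t:
  assumes "m \<ge> 1" "t \<ge> 1"
  shows "t \<le> yy m t"
proof -
  have Sp: "S m t > 0" "S (Suc m) t > 0" using S_pos[of m t] S_pos[of "Suc m" t] assms by (auto simp del: S_Suc)
  have Pp: "P m t > 0" using P_pos assms by auto
  have a: "t * P m t \<le> real m * S (Suc m) t" using tP_le assms by auto
  have b: "real m \<le> S m t" using S_ge assms by auto
  have "t * (real m * P m t) \<le> (S m t) * (real m * S (Suc m) t)"
  proof -
    have "t * (real m * P m t) = real m * (t * P m t)" by simp
    also have "\<dots> \<le> real m * (real m * S (Suc m) t)" using a by (simp add: mult_left_mono)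
    also have "\<dots> \<le> S m t * (real m * S (Suc m) t)"
      by (rule mult_right_mono[OF b]) (use Sp in simp)
    finally show ?thesis .
  qed
  then have "t * P m t \<le> S m t * S (Suc m) t" using assms by (simp add: mult_ac)
  then show ?thesis unfolding yy_def using Pp by (simp add: le_divide_eq del: S_Suc)
qed

lemma G_param:
  assumes m: "m \<ge> 1" and x: "0 < x" "x \<le> 1/2"
  shows "\<exists>t\<ge>1. yy m t = 1 / x \<and> G (Suc m) (1 / x) = GG m t"
proof (cases "x = 1/2")
  case True
  then have "1 / x = 2" by (simp only:) simp
  then show ?thesis using m by (intro exI[of _ 1]) (simp add: G_def yy_one GG_one)
next
  case False
  then have x2: "x < 1/2" using x by simp
  then have y2: "1 / x > 2" using x by (simp add: field_simps)
  have "\<exists>t. 1 \<le> t \<and> t \<le> 1 / x \<and> yy m t = 1 / x"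
  proof (rule IVT')
    show "yy m 1 \<le> 1 / x" using y2 m by (simp add: yy_one)
    show "1 / x \<le> yy m (1 / x)" using yy_ge_t[of m "1/x"] m y2 by simp
    show "1 \<le> 1 / x" using y2 by simp
    show "continuous_on {1..1/x} (yy m)" using yy_cont m by simp
  qed
  then obtain t where t: "1 \<le> t" "yy m t = 1 / x" by blast
  have t1: "t > 1" using t y2 m yy_one[of m] by (cases "t = 1") auto
  have inv: "P m s / (S m s * S (Suc m) s) = 1 / yy m s" for s
    unfolding yy_def by simp
  have xp: "xpar (Suc m) (t - 1) = x"
    using xpar_eq[OF m t1] t(2) x unfolding inv by simp
  have "G (Suc m) (1 / x) = (THE v. \<exists>\<gamma>>0. xpar (Suc m) \<gamma> = 1 / (1 / x) \<and> v = Fpar (Suc m) \<gamma> / xpar (Suc m) \<gamma>)"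
    unfolding G_def using m y2 by simp
  also have "\<dots> = GG m t"
  proof (rule the_equality)
    show "\<exists>\<gamma>>0. xpar (Suc m) \<gamma> = 1 / (1 / x) \<and> GG m t = Fpar (Suc m) \<gamma> / xpar (Suc m) \<gamma>"
      using xp FG_eq[OF m t1] t1 by (intro exI[of _ "t - 1"]) simp
  next
    fix v assume "\<exists>\<gamma>>0. xpar (Suc m) \<gamma> = 1 / (1 / x) \<and> v = Fpar (Suc m) \<gamma> / xpar (Suc m) \<gamma>"
    then obtain g where g: "g > 0" "xpar (Suc m) g = x" "v = Fpar (Suc m) g / xpar (Suc m) g" by auto
    have t1': "g + 1 > 1" using g by simp
    have eg: "g = (g + 1) - 1" by simp
    have "xpar (Suc m) ((g + 1) - 1) = x" using g(2) by simp
    then have "P m (g+1) / (S m (g+1) * S (Suc m) (g+1)) = x" using xpar_eq[OF m t1'] by simp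
    then have "1 / yy m (g + 1) = x" unfolding inv .
    moreover have "yy m (g + 1) > 0" using yy_pos[of m "g+1"] m t1' by simp
    ultimately have "yy m (g + 1) = 1 / x" using x by (simp add: field_simps)
    then have "g + 1 = t" using yy_inj[of m "g+1" t] t m t1' by simp
    then have "g = t - 1" by simp
    then show "v = GG m t" using g(3) FG_eq[OF m t1] by simp
  qed
  finally show ?thesis using t by blast
qed

lemma yy_two:
  assumes m: "m \<ge> 1"
  shows "yy m 2 \<le> 2^(Suc m)"
proof -
  define a :: real where "a = 2^m"
  have a1: "a \<ge> 2" unfolding a_def using m
    by (metis le_numeral_extra(4) nat_power_less_imp_less not_less numeral_le_iff order.trans
        power_one_right power_increasing[of 1 m "2::real"] one_le_numeral)
  have S1: "S m 2 = a - 1" using S_mul[of 2 m] unfolding a_def by simp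
  have S2: "S (Suc m) 2 = 2 * a - 1" using S_mul[of 2 "Suc m"] unfolding a_def by (simp del: S_Suc)
  have P2: "P m 2 = real m * a - (a - 1)" using P_mul[of 2 m] S1 unfolding a_def by simp
  have Pp: "P m 2 > 0" using P_pos m by simp
  have key: "(a - 1) * (2 * a - 1) \<le> 2 * a * (real m * a - (a - 1))"
  proof -
    have "2 * a * (real m * a - (a - 1)) - (a - 1) * (2 * a - 1) = 2 * (real m - 2) * a * a + 5 * a - 1"
      by (simp add: algebra_simps)
    moreover have "2 * (real m - 2) * a * a + 5 * a - 1 \<ge> 0"
    proof (cases "m = 1")
      case True
      then have "a = 2" unfolding a_def by simp
      then show ?thesis using True by simp
    next
      case False
      then have "real m - 2 \<ge> 0" using m by simp
      then have "2 * (real m - 2) * a * a \<ge> 0" using a1 by simp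
      then show ?thesis using a1 by linarith
    qed
    ultimately show ?thesis by linarith
  qed
  have Pp': "real m * a - (a - 1) > 0" using Pp P2 by simp
  have "yy m 2 = (a - 1) * (2 * a - 1) / (real m * a - (a - 1))"
    unfolding yy_def by (simp only: S1 S2 P2)
  also have "\<dots> \<le> 2 * a" using key Pp' by (simp add: divide_le_eq mult_ac)
  also have "2 * a = 2^Suc m" unfolding a_def by simp
  finally show ?thesis .
qed



lemma GG_pow:
  assumes m: "m \<ge> 1" and t: "t \<ge> 1"
  shows "GG m t ^ Suc m * (S (Suc m) t * P m t ^ m) = real (Suc m) ^ Suc m * yy m t * (real m ^ m * t ^ (m*m))"
proof -
  have Sp: "S m t > 0" "S (Suc m) t > 0" using S_pos[of m t] S_pos[of "Suc m" t] assms by (auto simp del: S_Suc)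
  have Pp: "P m t > 0" using P_pos assms by auto
  define B where "B = real m * t^m / S m t"
  have Bp: "B > 0" unfolding B_def using Sp m t by simp
  have Q: "(B powr (real m / real (Suc m))) ^ Suc m = B ^ m"
  proof -
    have Qp: "B powr (real m / real (Suc m)) > 0" using Bp by simp
    have "(B powr (real m / real (Suc m))) ^ Suc m = (B powr (real m / real (Suc m))) powr real (Suc m)"
      by (rule powr_realpow[symmetric]) (rule Qp)
    also have "\<dots> = B powr real m" unfolding powr_powr by simp
    also have "\<dots> = B ^ m" using Bp by (simp add: powr_realpow)
    finally show ?thesis .
  qed
  have "GG m t ^ Suc m = (real (Suc m) * S m t / P m t) ^ Suc m * B ^ m"
    unfolding GG_alt[OF m t] B_def[symmetric] power_mult_distrib Q ..
  also have "\<dots> = real (Suc m) ^ Suc m * (S m t * S m t ^ m) / (P m t * P m t ^ m) * (real m ^ m * t ^ (m*m) / S m t ^ m)"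
    unfolding B_def by (simp add: power_divide power_mult_distrib power_mult[symmetric] del: of_nat_Suc)
  finally have e: "GG m t ^ Suc m = real (Suc m) ^ Suc m * (S m t * S m t ^ m) / (P m t * P m t ^ m) * (real m ^ m * t ^ (m*m) / S m t ^ m)" .
  have nz: "S m t ^ m \<noteq> 0" "P m t ^ m \<noteq> 0" "P m t \<noteq> 0" using Sp Pp by auto
  show ?thesis unfolding e yy_def using nz by (simp add: field_simps del: S_Suc of_nat_Suc)
qed

lemma W_lower:
  assumes m: "m \<ge> 1" and t: "t \<ge> 1"
  shows "real m ^ m * t ^ (m*m) \<le> S (Suc m) t * P m t ^ m"
proof -
  have Pp: "P m t > 0" using P_pos assms by auto
  have a: "real m * t^m \<le> t * P m t" using tP_ge t by auto
  have "real m ^ m * t ^ (m*m) = (real m * t^m)^m" by (simp add: power_mult_distrib power_mult)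
  also have "\<dots> \<le> (t * P m t)^m" by (rule power_mono[OF a]) (use t in simp)
  also have "\<dots> = t^m * P m t ^ m" by (simp add: power_mult_distrib)
  also have "\<dots> \<le> S (Suc m) t * P m t ^ m"
  proof (rule mult_right_mono)
    show "t^m \<le> S (Suc m) t" using S_nonneg[of t m] t by simp
  qed (use Pp in simp)
  finally show ?thesis .
qed

lemma W_upper_gen:
  assumes m: "m \<ge> 1" and t: "t \<ge> 1" and c: "S (Suc m) t \<le> t^m * c"
  shows "S (Suc m) t * P m t ^ m \<le> real m ^ m * t ^ (m*m) * c ^ Suc m"
proof -
  have S1p: "S (Suc m) t > 0" using S_pos[of "Suc m" t] assms by (simp del: S_Suc)
  have Pp: "P m t > 0" using P_pos assms by auto
  have tm: "t^m > 0" using t by simp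
  have a: "t * P m t \<le> real m * S (Suc m) t" using tP_le t by auto
  have "t^m * (S (Suc m) t * P m t ^ m) = S (Suc m) t * (t * P m t)^m"
    by (simp add: power_mult_distrib)
  also have "\<dots> \<le> S (Suc m) t * (real m * S (Suc m) t)^m"
    by (rule mult_left_mono[OF power_mono[OF a]]) (use Pp t S1p in auto)
  also have "\<dots> = real m ^ m * S (Suc m) t ^ Suc m" by (simp add: power_mult_distrib)
  also have "\<dots> \<le> real m ^ m * (t^m * c) ^ Suc m"
    by (rule mult_left_mono[OF power_mono[OF c]]) (use S1p in auto)
  also have "\<dots> = t^m * (real m ^ m * t ^ (m*m) * c ^ Suc m)"
    by (simp add: power_mult_distrib power_mult[symmetric] algebra_simps)
  finally show ?thesis using tm by simp
qed

lemma S1_le2: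
  assumes "t \<ge> 2"
  shows "S (Suc m) t \<le> t^m * 2"
proof -
  have "(t - 1) * S (Suc m) t = t^Suc m - 1" by (rule S_mul)
  also have "\<dots> \<le> (t - 1) * (t^m * 2)"
  proof -
    have "t^m * t \<le> t^m * (2 * (t - 1))" using assms by (intro mult_left_mono) auto
    then show ?thesis by (simp add: algebra_simps)
  qed
  finally show ?thesis using assms by (simp del: S_Suc)
qed

lemma S1_le_lim:
  assumes "t \<ge> 1"
  shows "S (Suc m) t \<le> t^m * (1 + real m / t)"
proof -
  have "t * S m t \<le> real m * t^m" using tS_le assms by auto
  then have "S m t \<le> real m * t^m / t" using assms by (simp add: le_divide_eq mult.commute)
  then show ?thesis by (simp add: algebra_simps)
qed

lemma A_pow:
  assumes "x > 0" "n \<ge> 1"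
  shows "(real n / x powr (1 / real n)) ^ n = real n ^ n / x"
proof -
  have "(x powr (1 / real n)) ^ n = (x powr (1 / real n)) powr real n"
    by (rule powr_realpow[symmetric]) (use assms in simp)
  also have "\<dots> = x" unfolding powr_powr using assms by simp
  finally show ?thesis by (simp add: power_divide)
qed



lemma regime1:
  assumes m: "m \<ge> 1" and t: "t \<ge> 1" and x: "x > 0" and yx: "yy m t = 1 / x"
  shows "GG m t \<le> real (Suc m) / x powr (1 / real (Suc m))"
    and "x \<le> (1/2)^Suc m \<Longrightarrow> 1/2 * (real (Suc m) / x powr (1 / real (Suc m))) \<le> GG m t"
proof -
  define A where "A = real (Suc m) / x powr (1 / real (Suc m))"
  have Ap: "A > 0" unfolding A_def using x by simp
  have An0: "A ^ Suc m = real (Suc m) ^ Suc m / x" unfolding A_def by (rule A_pow[OF x]) simp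
  then have An: "A ^ Suc m = real (Suc m) ^ Suc m * yy m t" unfolding yx by simp
  have S1p: "S (Suc m) t > 0" using S_pos[of "Suc m" t] m t by (simp del: S_Suc)
  have Pp: "P m t > 0" using P_pos m t by auto
  have Wp: "S (Suc m) t * P m t ^ m > 0" using S1p Pp by simp
  have Gp: "GG m t > 0"
  proof -
    have "1 \<le> t^m" using t by (rule one_le_power)
    then have "t^m - 1 + yy m t > 0" using yy_pos[OF m t] by linarith
    then show ?thesis unfolding GG_def using DD_pos[OF m t] by simp
  qed
  have yp: "yy m t > 0" using yy_pos[OF m t] .
  have E: "GG m t ^ Suc m * (S (Suc m) t * P m t ^ m) = real (Suc m) ^ Suc m * yy m t * (real m ^ m * t ^ (m*m))"
    by (rule GG_pow[OF m t])
  have "GG m t ^ Suc m * (S (Suc m) t * P m t ^ m) \<le> A ^ Suc m * (S (Suc m) t * P m t ^ m)"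
    unfolding E An using W_lower[OF m t] yp by (simp add: mult_left_mono)
  then have "GG m t ^ Suc m \<le> A ^ Suc m" using mult_le_cancel_right_pos[OF Wp] by blast
  then show "GG m t \<le> real (Suc m) / x powr (1 / real (Suc m))"
    unfolding A_def[symmetric] by (rule power_le_imp_le_base) (use Ap in simp)
  assume xs: "x \<le> (1/2)^Suc m"
  have "2^Suc m \<le> 1 / x" using xs x by (simp add: field_simps power_divide)
  then have y2: "yy m 2 \<le> yy m t" using yy_two[OF m] yx by simp
  have t2: "t \<ge> 2"
  proof (rule ccontr)
    assume "\<not> t \<ge> 2"
    then have "yy m t < yy m 2" using yy_strict_mono[OF m t] by simp
    then show False using y2 by simp
  qed
  have W2: "S (Suc m) t * P m t ^ m \<le> real m ^ m * t ^ (m*m) * 2 ^ Suc m"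
    by (rule W_upper_gen[OF m t S1_le2[OF t2]])
  have "(A / 2) ^ Suc m * (S (Suc m) t * P m t ^ m) = real (Suc m) ^ Suc m * yy m t * (S (Suc m) t * P m t ^ m) / 2 ^ Suc m"
    unfolding power_divide An by simp
  also have "\<dots> \<le> real (Suc m) ^ Suc m * yy m t * (real m ^ m * t ^ (m*m) * 2 ^ Suc m) / 2 ^ Suc m"
    by (intro divide_right_mono mult_left_mono W2) (use yp in auto)
  also have "\<dots> = GG m t ^ Suc m * (S (Suc m) t * P m t ^ m)"
    unfolding E by simp
  finally have "(A / 2) ^ Suc m \<le> GG m t ^ Suc m" using mult_le_cancel_right_pos[OF Wp] by blast
  then have "A / 2 \<le> GG m t" by (rule power_le_imp_le_base) (use Gp in simp)
  then show "1/2 * (real (Suc m) / x powr (1 / real (Suc m))) \<le> GG m t" unfolding A_def by simp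
qed

lemma ratio_lower:
  assumes m: "m \<ge> 1" and t: "t \<ge> 1" and x: "x > 0" and yx: "yy m t = 1 / x"
  shows "1 / (1 + real m / t) \<le> GG m t / (real (Suc m) / x powr (1 / real (Suc m)))"
proof -
  define A where "A = real (Suc m) / x powr (1 / real (Suc m))"
  have Ap: "A > 0" unfolding A_def using x by simp
  have An0: "A ^ Suc m = real (Suc m) ^ Suc m / x" unfolding A_def by (rule A_pow[OF x]) simp
  then have An: "A ^ Suc m = real (Suc m) ^ Suc m * yy m t" unfolding yx by simp
  have S1p: "S (Suc m) t > 0" using S_pos[of "Suc m" t] m t by (simp del: S_Suc)
  have Pp: "P m t > 0" using P_pos m t by auto
  have Wp: "S (Suc m) t * P m t ^ m > 0" using S1p Pp by simp
  have Gp: "GG m t > 0"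
  proof -
    have "1 \<le> t^m" using t by (rule one_le_power)
    then have "t^m - 1 + yy m t > 0" using yy_pos[OF m t] by linarith
    then show ?thesis unfolding GG_def using DD_pos[OF m t] by simp
  qed
  have yp: "yy m t > 0" using yy_pos[OF m t] .
  define c where "c = 1 + real m / t"
  have cp: "c > 0" unfolding c_def using t by (simp add: add_pos_nonneg)
  have E: "GG m t ^ Suc m * (S (Suc m) t * P m t ^ m) = real (Suc m) ^ Suc m * yy m t * (real m ^ m * t ^ (m*m))"
    by (rule GG_pow[OF m t])
  have W2: "S (Suc m) t * P m t ^ m \<le> real m ^ m * t ^ (m*m) * c ^ Suc m"
    unfolding c_def by (rule W_upper_gen[OF m t S1_le_lim[OF t]])
  have "(A / c) ^ Suc m * (S (Suc m) t * P m t ^ m) = real (Suc m) ^ Suc m * yy m t * (S (Suc m) t * P m t ^ m) / c ^ Suc m"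
    unfolding power_divide An by simp
  also have "\<dots> \<le> real (Suc m) ^ Suc m * yy m t * (real m ^ m * t ^ (m*m) * c ^ Suc m) / c ^ Suc m"
    by (intro divide_right_mono mult_left_mono W2) (use yp cp in auto)
  also have "\<dots> = GG m t ^ Suc m * (S (Suc m) t * P m t ^ m)"
    unfolding E using cp by simp
  finally have "(A / c) ^ Suc m \<le> GG m t ^ Suc m" using mult_le_cancel_right_pos[OF Wp] by blast
  then have "A / c \<le> GG m t" by (rule power_le_imp_le_base) (use Gp in simp)
  then show ?thesis unfolding A_def[symmetric] c_def[symmetric] using Ap cp
    by (simp add: field_simps)
qed

lemma yy_le_poly:
  assumes m: "m \<ge> 1" and t: "t \<ge> 1"
  shows "yy m t \<le> real (Suc m) * t ^ Suc m"
proof -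
  have Sp: "S m t > 0" "S (Suc m) t > 0" using S_pos[of m t] S_pos[of "Suc m" t] assms by (auto simp del: S_Suc)
  have Pp: "P m t > 0" using P_pos assms by auto
  have "P m t - S m t = t * Sd m t" using tSd by simp
  moreover have "Sd m t \<ge> 0" unfolding Sd_def using t by (intro sum_nonneg) auto
  ultimately have SP: "S m t \<le> P m t" using t by (smt (verit) mult_nonneg_nonneg)
  have "yy m t \<le> S (Suc m) t" unfolding yy_def using SP Sp Pp
    by (simp add: divide_le_eq del: S_Suc)
  also have "\<dots> \<le> real (Suc m) * t ^ Suc m" using S_le[OF t, of "Suc m"] by (simp del: S_Suc)
  finally show ?thesis .
qed



theorem corollary4p2:
  fixes n :: nat
  assumes "n \<ge> 1"
  shows "(\<forall>x::real. 0 < x \<and> x \<le> 1/2 \<longrightarrow>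
            (x \<le> (1/2) ^ n \<longrightarrow>
               real n / x powr (1 / real n) \<ge> G n (1 / x) \<and>
               G n (1 / x) \<ge> 1/2 * (real n / x powr (1 / real n))) \<and>
            (x > (1/2) ^ n \<longrightarrow>
               2 * log 2 (1 / x) \<ge> G n (1 / x) \<and>
               G n (1 / x) \<ge> 2 + ln (1 / (2 * x))))
       \<and> ((\<lambda>x. G n (1 / x) / (real n / x powr (1 / real n))) \<longlongrightarrow> 1) (at_right 0)"
proof (cases "n = 1")
  case True
  have G1: "G 1 y = y" "G (Suc 0) y = y" for y by (simp_all add: G_def)
  show ?thesis
  proof
    show "\<forall>x::real. 0 < x \<and> x \<le> 1/2 \<longrightarrow>
            (x \<le> (1/2) ^ n \<longrightarrow>
               real n / x powr (1 / real n) \<ge> G n (1 / x) \<and>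
               G n (1 / x) \<ge> 1/2 * (real n / x powr (1 / real n))) \<and>
            (x > (1/2) ^ n \<longrightarrow>
               2 * log 2 (1 / x) \<ge> G n (1 / x) \<and>
               G n (1 / x) \<ge> 2 + ln (1 / (2 * x)))"
    proof -
      have h: "1 / (2 * x) \<le> 1 / x" if "x > 0" for x :: real using that by (simp add: field_simps)
      show ?thesis using True h by (auto simp: G1)
    qed
    have "\<forall>\<^sub>F x in at_right (0::real). G n (1 / x) / (real n / x powr (1 / real n)) = 1"
      using eventually_at_right_less[of "0::real"]
      by eventually_elim (simp add: True G1)
    then show "((\<lambda>x. G n (1 / x) / (real n / x powr (1 / real n))) \<longlongrightarrow> 1) (at_right 0)"
      by (rule tendsto_eventually)
  qed
next
  case False
  then obtain m where n: "n = Suc m" and m: "m \<ge> 1" using assms by (cases n) auto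
  show ?thesis unfolding n
  proof
    show "\<forall>x::real. 0 < x \<and> x \<le> 1/2 \<longrightarrow>
            (x \<le> (1/2) ^ Suc m \<longrightarrow>
               real (Suc m) / x powr (1 / real (Suc m)) \<ge> G (Suc m) (1 / x) \<and>
               G (Suc m) (1 / x) \<ge> 1/2 * (real (Suc m) / x powr (1 / real (Suc m)))) \<and>
            (x > (1/2) ^ Suc m \<longrightarrow>
               2 * log 2 (1 / x) \<ge> G (Suc m) (1 / x) \<and>
               G (Suc m) (1 / x) \<ge> 2 + ln (1 / (2 * x)))"
    proof (intro allI impI)
      fix x :: real assume x: "0 < x \<and> x \<le> 1/2"
      obtain t where t: "t \<ge> 1" "yy m t = 1/x" "G (Suc m) (1/x) = GG m t"
        using G_param[OF m] x by blast
      show "(x \<le> (1/2) ^ Suc m \<longrightarrow>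
               real (Suc m) / x powr (1 / real (Suc m)) \<ge> G (Suc m) (1 / x) \<and>
               G (Suc m) (1 / x) \<ge> 1/2 * (real (Suc m) / x powr (1 / real (Suc m)))) \<and>
            (x > (1/2) ^ Suc m \<longrightarrow>
               2 * log 2 (1 / x) \<ge> G (Suc m) (1 / x) \<and>
               G (Suc m) (1 / x) \<ge> 2 + ln (1 / (2 * x)))"
      proof (intro conjI impI)
        show "real (Suc m) / x powr (1 / real (Suc m)) \<ge> G (Suc m) (1 / x)"
          unfolding t(3) using regime1(1)[OF m t(1) _ t(2)] x by simp
        assume "x \<le> (1/2) ^ Suc m"
        then show "G (Suc m) (1 / x) \<ge> 1/2 * (real (Suc m) / x powr (1 / real (Suc m)))"
          unfolding t(3) using regime1(2)[OF m t(1) _ t(2)] x by simp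
      next
        assume xg: "x > (1/2) ^ Suc m"
        have "yy m t \<le> 2 ^ Suc m" unfolding t(2) using xg x
          by (simp add: field_simps power_divide)
        then have "GG m t \<le> 2 / ln 2 * ln (yy m t)" by (rule log_upper[OF m t(1)])
        also have "2 / ln 2 * ln (yy m t) = 2 * log 2 (1 / x)" unfolding t(2) log_def by simp
        finally show "2 * log 2 (1 / x) \<ge> G (Suc m) (1 / x)" unfolding t(3) .
      next
        have "2 + ln (yy m t / 2) \<le> GG m t" by (rule log_lower[OF m t(1)])
        moreover have "yy m t / 2 = 1 / (2 * x)" unfolding t(2) by simp
        ultimately show "G (Suc m) (1 / x) \<ge> 2 + ln (1 / (2 * x))" unfolding t(3) by simp
      qed
    qed
  next
    show "((\<lambda>x. G (Suc m) (1 / x) / (real (Suc m) / x powr (1 / real (Suc m)))) \<longlongrightarrow> 1) (at_right 0)"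
    proof (rule tendstoI)
      fix e :: real assume e: "e > 0"
      define M where "M = real m / e + 1"
      have M: "M \<ge> 1" unfolding M_def using e by simp
      define d where "d = min (1/2) (1 / (real (Suc m) * M ^ Suc m))"
      have dp: "d > 0" unfolding d_def using M by simp
      have "\<forall>y>0. y < d \<longrightarrow> dist (G (Suc m) (1 / y) / (real (Suc m) / y powr (1 / real (Suc m)))) 1 < e"
      proof (intro allI impI)
        fix y :: real assume y: "y > 0" "y < d"
        then have y2: "y \<le> 1/2" unfolding d_def by simp
        obtain t where t: "t \<ge> 1" "yy m t = 1/y" "G (Suc m) (1/y) = GG m t"
          using G_param[OF m] y y2 by blast
        define A where "A = real (Suc m) / y powr (1 / real (Suc m))"
        have Ap: "A > 0" unfolding A_def using y by simp
        have up: "GG m t / A \<le> 1" using regime1(1)[OF m t(1) y(1) t(2)] Ap unfolding A_def[symmetric]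
          by (simp add: divide_le_eq)
        have lo: "1 / (1 + real m / t) \<le> GG m t / A"
          using ratio_lower[OF m t(1) y(1) t(2)] unfolding A_def .
        have "y < 1 / (real (Suc m) * M ^ Suc m)" using y unfolding d_def by simp
        then have "real (Suc m) * M ^ Suc m < 1 / y"
        proof -
          assume a: "y < 1 / (real (Suc m) * M ^ Suc m)"
          have Qp: "real (Suc m) * M ^ Suc m > 0" using M by simp
          have "y * (real (Suc m) * M ^ Suc m) < 1" using a pos_less_divide_eq[OF Qp] by blast
          then show ?thesis using pos_less_divide_eq[OF y(1)] by (simp add: mult.commute)
        qed
        also have "1 / y \<le> real (Suc m) * t ^ Suc m" using yy_le_poly[OF m t(1)] t(2) by simp
        finally have "M ^ Suc m < t ^ Suc m" by simp
        then have Mt: "M < t" by (rule power_less_imp_less_base) (use t in simp)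
        then have "real m < e * t" unfolding M_def using e
          by (simp add: field_simps)
        then have mt: "real m / t < e" using t by (simp add: divide_less_eq mult.commute)
        have "1 - 1 / (1 + real m / t) = (real m / t) / (1 + real m / t)" using t
          by (simp add: field_simps)
        also have "\<dots> \<le> real m / t"
        proof -
          have q0: "real m / t \<ge> 0" using t by simp
          have "(real m / t) / (1 + real m / t) \<le> (real m / t) / 1"
            by (rule divide_left_mono) (use q0 in auto)
          then show ?thesis by simp
        qed
        finally have "1 - GG m t / A \<le> real m / t" using lo by linarith
        then have "dist (GG m t / A) 1 < e" using up mt by (simp add: dist_real_def abs_if)
        then show "dist (G (Suc m) (1 / y) / (real (Suc m) / y powr (1 / real (Suc m)))) 1 < e"
          unfolding t(3) A_def .
      qed
      then show "\<forall>\<^sub>F y in at_right 0. dist (G (Suc m) (1 / y) / (real (Suc m) / y powr (1 / real (Suc m)))) 1 < e"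
        using eventually_at_right[of 0 d] dp by blast
    qed
  qed
qed


end
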